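(* Let $\hat W^{\rm opt}$ be the optimal value of (P1) and let $\hat W=\max\{\hat W^{\rm narrow},\hat W^{\rm opt,wide}\}$, i.e. the value obtained by Algorithm I when Algorithm IIb is replaced by an exact (exhaustive) optimization of (P1) restricted to pairs in $\mathcal M^{\rm wide}$. Then $\hat W\ge\hat W^{\rm opt}/(1+T+\Delta+2J)$ if $\mathcal M^{\rm wide}=\emptyset$, and $\hat W\ge\hat W^{\rm opt}/(2+T+\Delta+2J)$ otherwise.
   Context: Setup. Users $\{1,\dots,K\}$ partitioned into groups $\mathcal G_1,\dots,\mathcal G_L$; $N$ RBs; a chunk is a vector $c\in\{0,1\}^N$ whose ones form a nonempty contiguous block, ${\rm Tail}(c)$ its last index; $\mathcal U$ the family of nonempty $U\subseteq\{1,\dots,K\}$ with $|U|\le T$ and $|U\cap\mathcal G_s|\le1$ for all $s$; pairs are elements of $\mathcal M=\mathcal U\times\mathcal C$. Metrics $p(U,c)\ge0$; weights $\beta^q(U,c)\in[0,1]$ ($q=1,\dots,J$); binary weights $\alpha^q(U,c)\in\{0,1\}$ ($q\in\mathcal I$, finite) with $\sum_{q\in\mathcal I}\alpha^q(U,c)\le\Delta$ per pair. A set $F$ of pairs is feasible if each group meets $U$ for at most one $(U,c)\in F$, each RB lies in $c$ for at most one $(U,c)\in F$, $\sum_F\beta^q\le1$ ($q\le J$), $\sum_F\alpha^q\le1$ ($q\in\mathcal I$); (P1) maximizes $\sum_F p$ over feasible $F$. Pairs conflict if some group meets both user sets, or the chunks share an RB, or some $q\in\mathcal I$ has both $\alpha^q$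 equal to 1. $\mathcal M^{\rm narrow}=\{(U,c):\beta^q(U,c)\le1/2\ \forall q\}$, $\mathcal M^{\rm wide}=\mathcal M\setminus\mathcal M^{\rm narrow}$; $\hat W^{\rm opt,wide}$ is the optimum of (P1) restricted to pairs in $\mathcal M^{\rm wide}$ (0 if empty); $\max_{q\le J}\beta^q:=0$ if $J=0$. $\hat W^{\rm narrow}$ is the value of the output of Algorithm IIa: set $p'=p$ on $\mathcal M^{\rm narrow}$, empty stack $S$; for $j=1,\dots,N$, let $(U^*,c^* )$ maximize $p'$ over pairs of $\mathcal M^{\rm narrow}$ with ${\rm Tail}(c)=j$; if $\hat p=p'(U^*,c^* )>0$, push it on $S$ and for each $(U,c)\in\mathcal M^{\rm narrow}$ with $p'(U,c)>0$ subtract $\hat p$ if it conflicts with $(U^*,c^* )$, else subtract $2\hat p\max_q\beta^q(U,c)$. Then pop $S$ from the top, adding each popped pair to an initially empty $S'$ if $S'$ plus it is feasible; $\hat W^{\rm narrow}=\sum_{S'}p$. *)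

theory Defs
  imports Complex_Main
begin

type_synonym pair = "nat set \<times> nat set"

definition groupset :: "nat \<Rightarrow> (nat \<Rightarrow> nat) \<Rightarrow> nat \<Rightarrow> nat set" where
  "groupset K g s = {k \<in> {1..K}. g k = s}"

text \<open>Chunks over RBs 1..N, identified with the (nonempty, contiguous) set of their ones.\<close>
definition chunks :: "nat \<Rightarrow> nat set set" where
  "chunks N = {{a..b} | a b. 1 \<le> a \<and> a \<le> b \<and> b \<le> N}"

definition tail :: "nat set \<Rightarrow> nat" where
  "tail c = Max c"

definition userSets :: "nat \<Rightarrow> (nat \<Rightarrow> nat) \<Rightarrow> nat \<Rightarrow> nat \<Rightarrow> nat set set" where
  "userSets K g L T = {U. U \<noteq> {} \<and> U \<subseteq> {1..K} \<and> card U \<le> T \<and>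
      (\<forall>s\<in>{1..L}. card (U \<inter> groupset K g s) \<le> 1)}"

definition pairs :: "nat \<Rightarrow> (nat \<Rightarrow> nat) \<Rightarrow> nat \<Rightarrow> nat \<Rightarrow> nat \<Rightarrow> pair set" where
  "pairs K g L T N = userSets K g L T \<times> chunks N"

definition feasible :: "nat \<Rightarrow> (nat \<Rightarrow> nat) \<Rightarrow> nat \<Rightarrow> nat \<Rightarrow> nat \<Rightarrow> (nat \<Rightarrow> pair \<Rightarrow> real)
    \<Rightarrow> 'q set \<Rightarrow> ('q \<Rightarrow> pair \<Rightarrow> nat) \<Rightarrow> pair set \<Rightarrow> bool" where
  "feasible K g L N J \<beta> I \<alpha> F \<longleftrightarrow>
     (\<forall>s\<in>{1..L}. card {x\<in>F. fst x \<inter> groupset K g s \<noteq> {}} \<le> 1) \<and>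
     (\<forall>n\<in>{1..N}. card {x\<in>F. n \<in> snd x} \<le> 1) \<and>
     (\<forall>q\<in>{1..J}. (\<Sum>x\<in>F. \<beta> q x) \<le> 1) \<and>
     (\<forall>q\<in>I. (\<Sum>x\<in>F. \<alpha> q x) \<le> 1)"

text \<open>Optimal value of (P1) restricted to pairs in A (Max over a finite family containing the empty set).\<close>
definition opt_value :: "pair set \<Rightarrow> (pair set \<Rightarrow> bool) \<Rightarrow> (pair \<Rightarrow> real) \<Rightarrow> real" where
  "opt_value A feas p = Max ((\<lambda>F. \<Sum>x\<in>F. p x) ` {F. F \<subseteq> A \<and> feas F})"

definition conflicts :: "nat \<Rightarrow> (nat \<Rightarrow> nat) \<Rightarrow> nat \<Rightarrow> 'q set \<Rightarrow> ('q \<Rightarrow> pair \<Rightarrow> nat)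
    \<Rightarrow> pair \<Rightarrow> pair \<Rightarrow> bool" where
  "conflicts K g L I \<alpha> x y \<longleftrightarrow>
     (\<exists>s\<in>{1..L}. fst x \<inter> groupset K g s \<noteq> {} \<and> fst y \<inter> groupset K g s \<noteq> {}) \<or>
     snd x \<inter> snd y \<noteq> {} \<or>
     (\<exists>q\<in>I. \<alpha> q x = 1 \<and> \<alpha> q y = 1)"

definition maxbeta :: "nat \<Rightarrow> (nat \<Rightarrow> pair \<Rightarrow> real) \<Rightarrow> pair \<Rightarrow> real" where
  "maxbeta J \<beta> x = (if J = 0 then 0 else Max ((\<lambda>q. \<beta> q x) ` {1..J}))"

definition narrow :: "nat \<Rightarrow> (nat \<Rightarrow> pair \<Rightarrow> real) \<Rightarrow> pair set \<Rightarrow> pair set" where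
  "narrow J \<beta> A = {x\<in>A. \<forall>q\<in>{1..J}. \<beta> q x \<le> 1/2}"

text \<open>Popping the stack (a list whose head is the top) into an initially empty S'.\<close>
definition greedy_pop :: "(pair set \<Rightarrow> bool) \<Rightarrow> pair list \<Rightarrow> pair set" where
  "greedy_pop feas xs = foldl (\<lambda>S' x. if feas (insert x S') then insert x S' else S') {} xs"

text \<open>A valid execution of the loop of Algorithm IIa (any tie-breaking of the maximizer):
  Pp j is p' after iteration j (only its values on Mn matter), St j the stack after iteration j
  (head = top).\<close>
definition algIIa_run :: "pair set \<Rightarrow> (pair \<Rightarrow> real) \<Rightarrow> (pair \<Rightarrow> pair \<Rightarrow> bool) \<Rightarrow> (pair \<Rightarrow> real)
    \<Rightarrow> nat \<Rightarrow> (nat \<Rightarrow> pair \<Rightarrow> real) \<Rightarrow> (nat \<Rightarrow> pair list) \<Rightarrow> bool" where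
  "algIIa_run Mn p conf mb N Pp St \<longleftrightarrow>
     (\<forall>x\<in>Mn. Pp 0 x = p x) \<and> St 0 = [] \<and>
     (\<forall>j\<in>{1..N}.
        let C = {x\<in>Mn. tail (snd x) = j} in
        (C = {} \<and> St j = St (j-1) \<and> (\<forall>x\<in>Mn. Pp j x = Pp (j-1) x)) \<or>
        (\<exists>xs\<in>C. (\<forall>x\<in>C. Pp (j-1) x \<le> Pp (j-1) xs) \<and>
           (let h = Pp (j-1) xs in
             (h \<le> 0 \<and> St j = St (j-1) \<and> (\<forall>x\<in>Mn. Pp j x = Pp (j-1) x)) \<or>
             (h > 0 \<and> St j = xs # St (j-1) \<and>
                (\<forall>x\<in>Mn. Pp j x = (if Pp (j-1) x > 0
                    then Pp (j-1) x - (if conf x xs then h else 2 * h * mb x)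
                    else Pp (j-1) x))))))"

end

theory Submission imports Defs begin

locale cs =
  fixes K L N T J \<Delta> :: nat
    and g :: "nat \<Rightarrow> nat"
    and p :: "pair \<Rightarrow> real"
    and \<beta> :: "nat \<Rightarrow> pair \<Rightarrow> real"
    and I :: "'q set"
    and \<alpha> :: "'q \<Rightarrow> pair \<Rightarrow> nat"
    and Pp :: "nat \<Rightarrow> pair \<Rightarrow> real"
    and St :: "nat \<Rightarrow> pair list"
  assumes part: "\<forall>k\<in>{1..K}. g k \<in> {1..L}"
    and finI: "finite I"
    and p_nonneg: "\<forall>x\<in>pairs K g L T N. p x \<ge> 0"
    and beta_range: "\<forall>x\<in>pairs K g L T N. \<forall>q\<in>{1..J}. 0 \<le> \<beta> q x \<and> \<beta> q x \<le> 1"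
    and alpha_bin: "\<forall>x\<in>pairs K g L T N. \<forall>q\<in>I. \<alpha> q x \<in> {0, 1}"
    and alpha_sum: "\<forall>x\<in>pairs K g L T N. (\<Sum>q\<in>I. \<alpha> q x) \<le> \<Delta>"
    and run: "algIIa_run (narrow J \<beta> (pairs K g L T N)) p (conflicts K g L I \<alpha>)
                (maxbeta J \<beta>) N Pp St"
begin

abbreviation "M \<equiv> pairs K g L T N"
abbreviation "Mn \<equiv> narrow J \<beta> M"
abbreviation "feas \<equiv> feasible K g L N J \<beta> I \<alpha>"
abbreviation "conf \<equiv> conflicts K g L I \<alpha>"
abbreviation "mb \<equiv> maxbeta J \<beta>"

definition pushP :: "nat \<Rightarrow> pair \<Rightarrow> bool" where
  "pushP j xs \<longleftrightarrow> xs \<in> Mn \<and> tail (snd xs) = j \<and> Pp (j-1) xs > 0 \<and>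
     (\<forall>x\<in>Mn. tail (snd x) = j \<longrightarrow> Pp (j-1) x \<le> Pp (j-1) xs) \<and> St j = xs # St (j-1) \<and>
     (\<forall>x\<in>Mn. Pp j x = (if Pp (j-1) x > 0
                    then Pp (j-1) x - (if conf x xs then Pp (j-1) xs else 2 * Pp (j-1) xs * mb x)
                    else Pp (j-1) x))"

definition nopush :: "nat \<Rightarrow> bool" where
  "nopush j \<longleftrightarrow> St j = St (j-1) \<and> (\<forall>x\<in>Mn. Pp j x = Pp (j-1) x) \<and>
     (\<forall>x\<in>Mn. tail (snd x) = j \<longrightarrow> Pp (j-1) x \<le> 0)"

lemma step_cases: assumes "j \<in> {1..N}" shows "nopush j \<or> (\<exists>xs. pushP j xs)"
proof -
  let ?C = "{x\<in>Mn. tail (snd x) = j}"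
  have r: "(?C = {} \<and> St j = St (j-1) \<and> (\<forall>x\<in>Mn. Pp j x = Pp (j-1) x)) \<or>
        (\<exists>xs\<in>?C. (\<forall>x\<in>?C. Pp (j-1) x \<le> Pp (j-1) xs) \<and>
           (let h = Pp (j-1) xs in
             (h \<le> 0 \<and> St j = St (j-1) \<and> (\<forall>x\<in>Mn. Pp j x = Pp (j-1) x)) \<or>
             (h > 0 \<and> St j = xs # St (j-1) \<and>
                (\<forall>x\<in>Mn. Pp j x = (if Pp (j-1) x > 0
                    then Pp (j-1) x - (if conf x xs then h else 2 * h * mb x)
                    else Pp (j-1) x)))))"
    using run assms unfolding algIIa_run_def Let_def by blast
  then show ?thesis
  proof
    assume "?C = {} \<and> St j = St (j-1) \<and> (\<forall>x\<in>Mn. Pp j x = Pp (j-1) x)"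
    then show ?thesis unfolding nopush_def by blast
  next
    assume "\<exists>xs\<in>?C. (\<forall>x\<in>?C. Pp (j-1) x \<le> Pp (j-1) xs) \<and>
           (let h = Pp (j-1) xs in
             (h \<le> 0 \<and> St j = St (j-1) \<and> (\<forall>x\<in>Mn. Pp j x = Pp (j-1) x)) \<or>
             (h > 0 \<and> St j = xs # St (j-1) \<and>
                (\<forall>x\<in>Mn. Pp j x = (if Pp (j-1) x > 0
                    then Pp (j-1) x - (if conf x xs then h else 2 * h * mb x)
                    else Pp (j-1) x))))"
    then obtain xs where xs: "xs \<in> ?C" "\<forall>x\<in>?C. Pp (j-1) x \<le> Pp (j-1) xs"
      and h: "(Pp (j-1) xs \<le> 0 \<and> St j = St (j-1) \<and> (\<forall>x\<in>Mn. Pp j x = Pp (j-1) x)) \<or>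
             (Pp (j-1) xs > 0 \<and> St j = xs # St (j-1) \<and>
                (\<forall>x\<in>Mn. Pp j x = (if Pp (j-1) x > 0
                    then Pp (j-1) x - (if conf x xs then Pp (j-1) xs else 2 * Pp (j-1) xs * mb x)
                    else Pp (j-1) x)))"
      unfolding Let_def by blast
    from h show ?thesis
    proof
      assume a: "Pp (j-1) xs \<le> 0 \<and> St j = St (j-1) \<and> (\<forall>x\<in>Mn. Pp j x = Pp (j-1) x)"
      have "\<forall>x\<in>Mn. tail (snd x) = j \<longrightarrow> Pp (j-1) x \<le> 0" using xs a by force
      then show ?thesis using a unfolding nopush_def by blast
    next
      assume a: "Pp (j-1) xs > 0 \<and> St j = xs # St (j-1) \<and>
                (\<forall>x\<in>Mn. Pp j x = (if Pp (j-1) x > 0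
                    then Pp (j-1) x - (if conf x xs then Pp (j-1) xs else 2 * Pp (j-1) xs * mb x)
                    else Pp (j-1) x))"
      have "pushP j xs" unfolding pushP_def using a xs by auto
      then show ?thesis by blast
    qed
  qed
qed

lemma chunk_form: assumes "c \<in> chunks N"
  shows "\<exists>a b. c = {a..b} \<and> 1 \<le> a \<and> a \<le> b \<and> b \<le> N \<and> tail c = b"
proof -
  obtain a b where "c = {a..b}" "1 \<le> a" "a \<le> b" "b \<le> N" using assms unfolding chunks_def by blast
  moreover have "tail {a..b} = b" using \<open>a \<le> b\<close> unfolding tail_def by (simp add: Max_eq_iff)
  ultimately show ?thesis by blast
qed

lemma M_fin: "finite M"
proof -
  have "userSets K g L T \<subseteq> Pow {1..K}" unfolding userSets_def by auto
  moreover have "chunks N \<subseteq> Pow {1..N}" unfolding chunks_def by auto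
  ultimately show ?thesis unfolding pairs_def
    by (meson finite_Pow_iff finite_SigmaI finite_atLeastAtMost finite_subset)
qed

lemma Mn_sub: "Mn \<subseteq> M" unfolding narrow_def by auto

lemma tail_props: assumes "x \<in> M"
  shows "tail (snd x) \<in> snd x" "1 \<le> tail (snd x)" "tail (snd x) \<le> N"
proof -
  have "snd x \<in> chunks N" using assms unfolding pairs_def by auto
  then obtain a b where "snd x = {a..b}" "1 \<le> a" "a \<le> b" "b \<le> N" "tail (snd x) = b"
    using chunk_form by blast
  then show "tail (snd x) \<in> snd x" "1 \<le> tail (snd x)" "tail (snd x) \<le> N" by auto
qed

lemma mb_nonneg: assumes "x \<in> M" shows "0 \<le> mb x"
proof (cases "J = 0")
  case False
  have "0 \<le> \<beta> 1 x" using beta_range assms False by auto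
  also have "\<beta> 1 x \<le> Max ((\<lambda>q. \<beta> q x) ` {1..J})" using False by (intro Max_ge) auto
  finally show ?thesis using False unfolding maxbeta_def by simp
qed (simp add: maxbeta_def)

lemma mb_le: assumes "x \<in> M" shows "mb x \<le> (\<Sum>q\<in>{1..J}. \<beta> q x)"
proof (cases "J = 0")
  case False
  have "Max ((\<lambda>q. \<beta> q x) ` {1..J}) \<in> (\<lambda>q. \<beta> q x) ` {1..J}" using False by (intro Max_in) auto
  then obtain q where q0: "q \<in> {1..J}" "Max ((\<lambda>q. \<beta> q x) ` {1..J}) = \<beta> q x" by blast
  then have q: "q \<in> {1..J}" "mb x = \<beta> q x" using False unfolding maxbeta_def by auto
  have "\<beta> q x \<le> (\<Sum>q\<in>{1..J}. \<beta> q x)"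
    by (rule member_le_sum) (use q beta_range assms in auto)
  then show ?thesis using q by simp
qed (simp add: maxbeta_def)


lemma conf_of_common: assumes "n \<in> snd x" "n \<in> snd y" shows "conf x y"
  using assms unfolding conflicts_def by blast

lemma push_dec: assumes "pushP j xs" "x \<in> Mn"
  shows "Pp (j-1) x - Pp j x = (if Pp (j-1) x > 0
                    then (if conf x xs then Pp (j-1) xs else 2 * Pp (j-1) xs * mb x) else 0)"
  using assms unfolding pushP_def by auto

lemma step_facts: assumes j: "j \<in> {1..N}" and x: "x \<in> Mn"
  shows "Pp j x \<le> Pp (j-1) x" "Pp (j-1) x \<le> 0 \<Longrightarrow> Pp j x = Pp (j-1) x"
    "tail (snd x) = j \<Longrightarrow> Pp j x \<le> 0"
proof -
  have xM: "x \<in> M" using x Mn_sub by auto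
  have "(Pp j x \<le> Pp (j-1) x) \<and> (Pp (j-1) x \<le> 0 \<longrightarrow> Pp j x = Pp (j-1) x) \<and>
    (tail (snd x) = j \<longrightarrow> Pp j x \<le> 0)"
  proof (cases "nopush j")
    case True
    then show ?thesis using x unfolding nopush_def by auto
  next
    case False
    then obtain xs where P: "pushP j xs" using step_cases j by blast
    have d: "Pp (j-1) x - Pp j x = (if Pp (j-1) x > 0
                    then (if conf x xs then Pp (j-1) xs else 2 * Pp (j-1) xs * mb x) else 0)"
      using push_dec P x by blast
    have h: "Pp (j-1) xs > 0" "tail (snd xs) = j" "xs \<in> Mn"
      and le: "tail (snd x) = j \<Longrightarrow> Pp (j-1) x \<le> Pp (j-1) xs" using P x unfolding pushP_def by auto
    have "0 \<le> mb x" using mb_nonneg xM .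
    then have nn: "0 \<le> Pp (j-1) x - Pp j x" using d h by auto
    have t3: "Pp j x \<le> 0" if t: "tail (snd x) = j"
    proof (cases "Pp (j-1) x > 0")
      case True
      have "j \<in> snd x" using tail_props(1)[OF xM] t by simp
      moreover have "j \<in> snd xs" using tail_props(1)[of xs] h Mn_sub by auto
      ultimately have "conf x xs" by (rule conf_of_common)
      then show ?thesis using d True le[OF t] by auto
    next
      case False
      then show ?thesis using d by auto
    qed
    show ?thesis using nn d t3 by auto
  qed
  then show "Pp j x \<le> Pp (j-1) x" "Pp (j-1) x \<le> 0 \<Longrightarrow> Pp j x = Pp (j-1) x"
    "tail (snd x) = j \<Longrightarrow> Pp j x \<le> 0" by auto
qed

lemma final_nonpos: assumes x: "x \<in> Mn" shows "tail (snd x) \<le> j \<Longrightarrow> j \<le> N \<Longrightarrow> Pp j x \<le> 0"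
proof (induction j)
  case 0
  then show ?case using tail_props(2)[of x] x Mn_sub by auto
next
  case (Suc j)
  have j: "Suc j \<in> {1..N}" using Suc by auto
  show ?case
  proof (cases "tail (snd x) = Suc j")
    case True
    then show ?thesis using step_facts(3)[OF j x] by simp
  next
    case False
    then have "Pp j x \<le> 0" using Suc by auto
    then show ?thesis using step_facts(2)[OF j x] by simp
  qed
qed

lemma feas_subset: assumes "feas F" "G \<subseteq> F" "F \<subseteq> M" shows "feas G"
proof -
  have fF: "finite F" using M_fin assms(3) finite_subset by blast
  have fG: "finite G" using fF assms(2) finite_subset by blast
  have 1: "\<forall>s\<in>{1..L}. card {x\<in>G. fst x \<inter> groupset K g s \<noteq> {}} \<le> 1"
  proof
    fix s assume s: "s \<in> {1..L}"
    have "card {x\<in>G. fst x \<inter> groupset K g s \<noteq> {}} \<le> card {x\<in>F. fst x \<inter> groupset K g s \<noteq> {}}"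
      by (rule card_mono) (use fF assms(2) in auto)
    then show "card {x\<in>G. fst x \<inter> groupset K g s \<noteq> {}} \<le> 1"
      using assms(1) s unfolding feasible_def by fastforce
  qed
  have 2: "\<forall>n\<in>{1..N}. card {x\<in>G. n \<in> snd x} \<le> 1"
  proof
    fix n assume s: "n \<in> {1..N}"
    have "card {x\<in>G. n \<in> snd x} \<le> card {x\<in>F. n \<in> snd x}"
      by (rule card_mono) (use fF assms(2) in auto)
    then show "card {x\<in>G. n \<in> snd x} \<le> 1"
      using assms(1) s unfolding feasible_def by fastforce
  qed
  have 3: "\<forall>q\<in>{1..J}. (\<Sum>x\<in>G. \<beta> q x) \<le> 1"
  proof
    fix q assume q: "q \<in> {1..J}"
    have "(\<Sum>x\<in>G. \<beta> q x) \<le> (\<Sum>x\<in>F. \<beta> q x)"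
      by (rule sum_mono2) (use fF assms(2,3) q beta_range in auto)
    then show "(\<Sum>x\<in>G. \<beta> q x) \<le> 1" using assms(1) q unfolding feasible_def by fastforce
  qed
  have 4: "\<forall>q\<in>I. (\<Sum>x\<in>G. \<alpha> q x) \<le> 1"
  proof
    fix q assume q: "q \<in> I"
    have "(\<Sum>x\<in>G. \<alpha> q x) \<le> (\<Sum>x\<in>F. \<alpha> q x)"
      by (rule sum_mono2) (use fF assms(2) in auto)
    then show "(\<Sum>x\<in>G. \<alpha> q x) \<le> 1" using assms(1) q unfolding feasible_def by fastforce
  qed
  show ?thesis using 1 2 3 4 unfolding feasible_def by blast
qed


lemma card_insert_excl:
  assumes "finite S" "\<forall>y\<in>S. \<not> P y" "card {x\<in>S. P x} \<le> 1"
  shows "card {x\<in>insert xs S. P x} \<le> 1"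
proof (cases "P xs")
  case True
  then have "{x\<in>insert xs S. P x} = {xs}" using assms by auto
  then show ?thesis by simp
next
  case False
  then have "{x\<in>insert xs S. P x} = {x\<in>S. P x}" by auto
  then show ?thesis using assms by simp
qed

lemma insert_feas:
  assumes xs: "xs \<in> M" and S: "S \<subseteq> M" and fS: "feas S" and nc: "\<forall>y\<in>S. \<not> conf y xs"
    and b: "\<forall>q\<in>{1..J}. (\<Sum>x\<in>insert xs S. \<beta> q x) \<le> 1" and nin: "xs \<notin> S"
  shows "feas (insert xs S)"
proof -
  have fin: "finite S" using M_fin S finite_subset by blast
  have 1: "\<forall>s\<in>{1..L}. card {x\<in>insert xs S. fst x \<inter> groupset K g s \<noteq> {}} \<le> 1"
  proof
    fix s assume s: "s \<in> {1..L}"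
    have c: "card {x\<in>S. fst x \<inter> groupset K g s \<noteq> {}} \<le> 1" using fS s unfolding feasible_def by blast
    show "card {x\<in>insert xs S. fst x \<inter> groupset K g s \<noteq> {}} \<le> 1"
    proof (cases "fst xs \<inter> groupset K g s \<noteq> {}")
      case True
      have "\<forall>y\<in>S. \<not> (fst y \<inter> groupset K g s \<noteq> {})" using nc True s unfolding conflicts_def by blast
      then have "{x\<in>insert xs S. fst x \<inter> groupset K g s \<noteq> {}} = {xs}" using True by auto
      then show ?thesis by simp
    next
      case False
      then have "{x\<in>insert xs S. fst x \<inter> groupset K g s \<noteq> {}} = {x\<in>S. fst x \<inter> groupset K g s \<noteq> {}}" by auto
      then show ?thesis using c by simp
    qed
  qed
  have 2: "\<forall>n\<in>{1..N}. card {x\<in>insert xs S. n \<in> snd x} \<le> 1"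
  proof
    fix n assume s: "n \<in> {1..N}"
    have c: "card {x\<in>S. n \<in> snd x} \<le> 1" using fS s unfolding feasible_def by blast
    show "card {x\<in>insert xs S. n \<in> snd x} \<le> 1"
    proof (cases "n \<in> snd xs")
      case True
      have "\<forall>y\<in>S. n \<notin> snd y" using nc True unfolding conflicts_def by blast
      then have "{x\<in>insert xs S. n \<in> snd x} = {xs}" using True by auto
      then show ?thesis by simp
    next
      case False
      then have "{x\<in>insert xs S. n \<in> snd x} = {x\<in>S. n \<in> snd x}" by auto
      then show ?thesis using c by simp
    qed
  qed
  have 4: "\<forall>q\<in>I. (\<Sum>x\<in>insert xs S. \<alpha> q x) \<le> 1"
  proof
    fix q assume q: "q \<in> I"
    have c: "(\<Sum>x\<in>S. \<alpha> q x) \<le> 1" using fS q unfolding feasible_def by blast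
    have eq: "(\<Sum>x\<in>insert xs S. \<alpha> q x) = \<alpha> q xs + (\<Sum>x\<in>S. \<alpha> q x)" using fin nin by simp
    show "(\<Sum>x\<in>insert xs S. \<alpha> q x) \<le> 1"
    proof (cases "\<alpha> q xs = 1")
      case True
      have "\<forall>y\<in>S. \<alpha> q y \<noteq> 1" using nc True q unfolding conflicts_def by blast
      then have "\<forall>y\<in>S. \<alpha> q y = 0" using alpha_bin S q by fastforce
      then have "(\<Sum>x\<in>S. \<alpha> q x) = 0" by simp
      then show ?thesis using eq True by simp
    next
      case False
      then have "\<alpha> q xs = 0" using alpha_bin xs q by fastforce
      then show ?thesis using eq c by simp
    qed
  qed
  show ?thesis using 1 2 b 4 unfolding feasible_def by blast
qed

lemma dec_lower:
  assumes P: "pushP j xs" and S: "S \<subseteq> Mn" and fS: "feas S" and nf: "\<not> feas (insert xs S)"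
    and nin: "xs \<notin> S" and pos: "\<forall>y\<in>S. Pp (j-1) y > 0"
  shows "(\<Sum>y\<in>S. Pp (j-1) y - Pp j y) \<ge> Pp (j-1) xs"
proof -
  let ?h = "Pp (j-1) xs"
  have SM: "S \<subseteq> M" using S Mn_sub by auto
  have fin: "finite S" using M_fin SM finite_subset by blast
  have h: "?h > 0" "xs \<in> Mn" using P unfolding pushP_def by auto
  have xsM: "xs \<in> M" using h Mn_sub by auto
  have tm: "\<And>y. y \<in> S \<Longrightarrow> Pp (j-1) y - Pp j y = (if conf y xs then ?h else 2 * ?h * mb y)"
    using push_dec[OF P] S pos by auto
  have tnn: "\<And>y. y \<in> S \<Longrightarrow> 0 \<le> Pp (j-1) y - Pp j y"
    using tm h mb_nonneg SM by fastforce
  show ?thesis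
  proof (cases "\<exists>y0\<in>S. conf y0 xs")
    case True
    then obtain y0 where y0: "y0 \<in> S" "conf y0 xs" by blast
    have "Pp (j-1) y0 - Pp j y0 \<le> (\<Sum>y\<in>S. Pp (j-1) y - Pp j y)"
      by (rule member_le_sum) (use y0 fin tnn in auto)
    then show ?thesis using tm y0 by simp
  next
    case False
    then have nc: "\<forall>y\<in>S. \<not> conf y xs" by blast
    have "\<not> (\<forall>q\<in>{1..J}. (\<Sum>x\<in>insert xs S. \<beta> q x) \<le> 1)"
      using insert_feas[OF xsM SM fS nc _ nin] nf by blast
    then obtain q where q: "q \<in> {1..J}" "(\<Sum>x\<in>insert xs S. \<beta> q x) > 1" by force
    have "\<beta> q xs \<le> 1/2" using h q unfolding narrow_def by auto
    moreover have "(\<Sum>x\<in>insert xs S. \<beta> q x) = \<beta> q xs + (\<Sum>x\<in>S. \<beta> q x)" using fin nin by simp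
    ultimately have half: "(\<Sum>x\<in>S. \<beta> q x) > 1/2" using q by linarith
    have J: "J \<noteq> 0" using q by auto
    have mbge: "\<And>y. y \<in> S \<Longrightarrow> \<beta> q y \<le> mb y"
      unfolding maxbeta_def using J q by (auto intro: Max_ge)
    have "(\<Sum>y\<in>S. Pp (j-1) y - Pp j y) = (\<Sum>y\<in>S. 2 * ?h * mb y)"
      using tm nc by (intro sum.cong) auto
    also have "\<dots> \<ge> (\<Sum>y\<in>S. 2 * ?h * \<beta> q y)"
      by (rule sum_mono) (use mbge h in auto)
    finally have "(\<Sum>y\<in>S. Pp (j-1) y - Pp j y) \<ge> 2 * ?h * (\<Sum>y\<in>S. \<beta> q y)"
      by (simp add: sum_distrib_left)
    moreover have "2 * ?h * (\<Sum>y\<in>S. \<beta> q y) \<ge> ?h"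
    proof -
      have "?h * 1 \<le> ?h * (2 * (\<Sum>y\<in>S. \<beta> q y))"
        by (rule mult_left_mono) (use half h in auto)
      then show ?thesis by (simp add: mult.assoc mult.left_commute)
    qed
    ultimately show ?thesis by linarith
  qed
qed


lemma conf_count:
  assumes P: "pushP j xs" and j: "j \<in> {1..N}" and F: "F \<subseteq> Mn" and fF: "feas F"
  shows "card {y\<in>F. Pp (j-1) y > 0 \<and> conf y xs} \<le> T + 1 + \<Delta>"
proof -
  have FM: "F \<subseteq> M" using F Mn_sub by auto
  have fin: "finite F" using M_fin FM finite_subset by blast
  have xsMn: "xs \<in> Mn" and tj: "tail (snd xs) = j" using P unfolding pushP_def by auto
  have xsM: "xs \<in> M" using xsMn Mn_sub by auto
  obtain a where snx: "snd xs = {a..j}" using chunk_form[of "snd xs"] xsM tj unfolding pairs_def by fastforce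
  define Sx where "Sx = {s\<in>{1..L}. fst xs \<inter> groupset K g s \<noteq> {}}"
  define Q where "Q = {q\<in>I. \<alpha> q xs = 1}"
  define A where "A = (\<Union>s\<in>Sx. {y\<in>F. fst y \<inter> groupset K g s \<noteq> {}})"
  define B where "B = {y\<in>F. j \<in> snd y}"
  define C where "C = (\<Union>q\<in>Q. {y\<in>F. \<alpha> q y = 1})"
  have sub: "{y\<in>F. Pp (j-1) y > 0 \<and> conf y xs} \<subseteq> A \<union> B \<union> C"
  proof
    fix y assume y: "y \<in> {y\<in>F. Pp (j-1) y > 0 \<and> conf y xs}"
    then have yF: "y \<in> F" and pos: "Pp (j-1) y > 0" and cf: "conf y xs" by auto
    have yMn: "y \<in> Mn" using yF F by auto
    have ty: "tail (snd y) \<ge> j"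
    proof (rule ccontr)
      assume "\<not> tail (snd y) \<ge> j"
      then have "Pp (j-1) y \<le> 0" using final_nonpos[OF yMn] j by auto
      then show False using pos by simp
    qed
    from cf show "y \<in> A \<union> B \<union> C" unfolding conflicts_def
    proof (elim disjE)
      assume "\<exists>s\<in>{1..L}. fst y \<inter> groupset K g s \<noteq> {} \<and> fst xs \<inter> groupset K g s \<noteq> {}"
      then have "y \<in> A" unfolding A_def Sx_def using yF by blast
      then show ?thesis by blast
    next
      assume "snd y \<inter> snd xs \<noteq> {}"
      then obtain n where n: "n \<in> snd y" "n \<in> snd xs" by blast
      have "snd y \<in> chunks N" using yMn Mn_sub unfolding pairs_def by auto
      then obtain a' b' where yc: "snd y = {a'..b'}" "tail (snd y) = b'" using chunk_form by blast
      have "j \<in> snd y" using n yc snx ty by auto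
      then show ?thesis unfolding B_def using yF by blast
    next
      assume "\<exists>q\<in>I. \<alpha> q y = 1 \<and> \<alpha> q xs = 1"
      then have "y \<in> C" unfolding C_def Q_def using yF by blast
      then show ?thesis by blast
    qed
  qed
  have finSx: "finite Sx" unfolding Sx_def by auto
  have finQ: "finite Q" unfolding Q_def using finI by auto
  have cA: "card A \<le> T"
  proof -
    have "card A \<le> (\<Sum>s\<in>Sx. card {y\<in>F. fst y \<inter> groupset K g s \<noteq> {}})"
      unfolding A_def by (rule card_UN_le[OF finSx])
    also have "\<dots> \<le> (\<Sum>s\<in>Sx. 1)"
      by (rule sum_mono) (use fF in \<open>auto simp: feasible_def Sx_def\<close>)
    also have "\<dots> = card Sx" by simp
    also have "card Sx \<le> card (g ` fst xs)"
    proof (rule card_mono)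
      have "fst xs \<in> userSets K g L T" using xsM unfolding pairs_def by auto
      then have "fst xs \<subseteq> {1..K}" unfolding userSets_def by auto
      then show "finite (g ` fst xs)" using finite_subset by blast
      show "Sx \<subseteq> g ` fst xs" unfolding Sx_def groupset_def by auto
    qed
    also have "\<dots> \<le> card (fst xs)" by (rule card_image_le) (use xsM in \<open>auto simp: pairs_def userSets_def dest: finite_subset\<close>)
    also have "\<dots> \<le> T" using xsM unfolding pairs_def userSets_def by auto
    finally show ?thesis .
  qed
  have cB: "card B \<le> 1" unfolding B_def using fF j unfolding feasible_def by blast
  have cC: "card C \<le> \<Delta>"
  proof -
    have "card C \<le> (\<Sum>q\<in>Q. card {y\<in>F. \<alpha> q y = 1})"
      unfolding C_def by (rule card_UN_le[OF finQ])
    also have "\<dots> \<le> (\<Sum>q\<in>Q. 1)"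
    proof (rule sum_mono)
      fix q assume q: "q \<in> Q"
      have "card {y\<in>F. \<alpha> q y = 1} = (\<Sum>y\<in>{y\<in>F. \<alpha> q y = 1}. \<alpha> q y)" by simp
      also have "\<dots> \<le> (\<Sum>y\<in>F. \<alpha> q y)" by (rule sum_mono2) (use fin in auto)
      also have "\<dots> \<le> 1" using fF q unfolding feasible_def Q_def by auto
      finally show "card {y\<in>F. \<alpha> q y = 1} \<le> 1" .
    qed
    also have "\<dots> = (\<Sum>q\<in>Q. \<alpha> q xs)" unfolding Q_def by simp
    also have "\<dots> \<le> (\<Sum>q\<in>I. \<alpha> q xs)" by (rule sum_mono2) (use finI in \<open>auto simp: Q_def\<close>)
    also have "\<dots> \<le> \<Delta>" using alpha_sum xsM by auto
    finally show ?thesis .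
  qed
  have "card {y\<in>F. Pp (j-1) y > 0 \<and> conf y xs} \<le> card (A \<union> B \<union> C)"
  proof (rule card_mono[OF _ sub])
    have "A \<union> B \<union> C \<subseteq> F" unfolding A_def B_def C_def by auto
    then show "finite (A \<union> B \<union> C)" using fin finite_subset by blast
  qed
  also have "\<dots> \<le> card A + card B + card C" using card_Un_le[of "A \<union> B" C] card_Un_le[of A B] by linarith
  finally show ?thesis using cA cB cC by linarith
qed


definition hv :: "nat \<Rightarrow> real" where
  "hv j = (if \<exists>xs. pushP j xs then Pp (j-1) (SOME xs. pushP j xs) else 0)"

lemma dec_upper:
  assumes j: "j \<in> {1..N}" and F: "F \<subseteq> Mn" and fF: "feas F"
  shows "(\<Sum>y\<in>F. Pp (j-1) y - Pp j y) \<le> (1 + real T + real \<Delta> + 2 * real J) * hv j"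
proof -
  have FM: "F \<subseteq> M" using F Mn_sub by auto
  have fin: "finite F" using M_fin FM finite_subset by blast
  show ?thesis
  proof (cases "\<exists>xs. pushP j xs")
    case False
    then have "nopush j" using step_cases j by blast
    then have "\<forall>y\<in>F. Pp (j-1) y - Pp j y = 0" using F unfolding nopush_def by auto
    then show ?thesis using False unfolding hv_def by simp
  next
    case True
    define xs where "xs = (SOME xs. pushP j xs)"
    have P: "pushP j xs" unfolding xs_def using True by (rule someI_ex)
    let ?h = "Pp (j-1) xs"
    have hv: "hv j = ?h" unfolding hv_def xs_def using True by simp
    have h: "?h > 0" using P unfolding pushP_def by auto
    let ?P = "\<lambda>y. Pp (j-1) y > 0 \<and> conf y xs"
    have tle: "Pp (j-1) y - Pp j y \<le> ?h * (if ?P y then 1 else 0) + 2 * ?h * mb y" if y: "y \<in> F" for y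
    proof -
      have d: "Pp (j-1) y - Pp j y = (if Pp (j-1) y > 0
                    then (if conf y xs then ?h else 2 * ?h * mb y) else 0)"
        using push_dec[OF P, of y] y F by blast
      have "0 \<le> mb y" using mb_nonneg[of y] y FM by blast
      then have "0 \<le> 2 * ?h * mb y" using h by simp
      then show ?thesis using d h by auto
    qed
    have "(\<Sum>y\<in>F. Pp (j-1) y - Pp j y) \<le> (\<Sum>y\<in>F. ?h * (if ?P y then 1 else 0) + 2 * ?h * mb y)"
      by (rule sum_mono) (rule tle)
    also have "\<dots> = ?h * (\<Sum>y\<in>F. (if ?P y then 1 else 0)) + 2 * ?h * (\<Sum>y\<in>F. mb y)"
      by (simp add: sum.distrib sum_distrib_left)
    also have "(\<Sum>y\<in>F. (if ?P y then 1 else 0)) = real (card {y\<in>F. ?P y})"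
      using sum.inter_filter[OF fin, of "\<lambda>_. (1::real)" ?P] by simp
    also have "(\<Sum>y\<in>F. mb y) \<le> real J"
    proof -
      have "(\<Sum>y\<in>F. mb y) \<le> (\<Sum>y\<in>F. \<Sum>q\<in>{1..J}. \<beta> q y)"
        by (rule sum_mono) (use mb_le FM in blast)
      also have "\<dots> = (\<Sum>q\<in>{1..J}. \<Sum>y\<in>F. \<beta> q y)" by (rule sum.swap)
      also have "\<dots> \<le> (\<Sum>q\<in>{1..J}. 1)"
        by (rule sum_mono) (use fF in \<open>auto simp: feasible_def\<close>)
      finally show ?thesis by simp
    qed
    also have "real (card {y\<in>F. ?P y}) \<le> real T + 1 + real \<Delta>"
      using conf_count[OF P j F fF] by linarith
    ultimately have "(\<Sum>y\<in>F. Pp (j-1) y - Pp j y) \<le> ?h * (real T + 1 + real \<Delta>) + 2 * ?h * real J"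
      using h by (smt (verit, ccfv_SIG) mult_left_mono)
    then show ?thesis unfolding hv by (simp add: algebra_simps)
  qed
qed


abbreviation "gf \<equiv> (\<lambda>S' x. if feas (insert x S') then insert x S' else S')"

lemma hv_nonneg: "0 \<le> hv j"
proof (cases "\<exists>xs. pushP j xs")
  case True
  then have "pushP j (SOME xs. pushP j xs)" by (rule someI_ex)
  then have "Pp (j-1) (SOME xs. pushP j xs) > 0" unfolding pushP_def by blast
  then show ?thesis using True unfolding hv_def by simp
qed (simp add: hv_def)

lemma greedy_ind:
  "j \<le> N \<Longrightarrow> \<forall>S. finite S \<and> S \<subseteq> Mn \<and> feas S \<and> (\<forall>y\<in>S. Pp j y > 0 \<and> tail (snd y) > j) \<longrightarrow>
     (\<Sum>x\<in>foldl gf S (St j). p x) \<ge> (\<Sum>y\<in>S. Pp j y) + (\<Sum>k\<in>{1..j}. hv k)"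
proof (induction j)
  case 0
  have "St 0 = []" "\<forall>x\<in>Mn. Pp 0 x = p x" using run unfolding algIIa_run_def by auto
  then show ?case by (auto intro!: sum_mono simp: subset_iff)
next
  case (Suc j)
  have jj: "Suc j \<in> {1..N}" using Suc by auto
  have IH: "\<And>S. finite S \<Longrightarrow> S \<subseteq> Mn \<Longrightarrow> feas S \<Longrightarrow> (\<forall>y\<in>S. Pp j y > 0 \<and> tail (snd y) > j) \<Longrightarrow>
     (\<Sum>x\<in>foldl gf S (St j). p x) \<ge> (\<Sum>y\<in>S. Pp j y) + (\<Sum>k\<in>{1..j}. hv k)"
    using Suc.IH Suc.prems by simp
  have sumS: "(\<Sum>k\<in>{1..Suc j}. hv k) = (\<Sum>k\<in>{1..j}. hv k) + hv (Suc j)" by simp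
  show ?case
  proof (intro allI impI)
    fix S assume A: "finite S \<and> S \<subseteq> Mn \<and> feas S \<and> (\<forall>y\<in>S. Pp (Suc j) y > 0 \<and> tail (snd y) > Suc j)"
    then have fin: "finite S" and S: "S \<subseteq> Mn" and fS: "feas S"
      and yS: "\<And>y. y \<in> S \<Longrightarrow> Pp (Suc j) y > 0 \<and> tail (snd y) > Suc j" by auto
    have mono: "\<And>y. y \<in> S \<Longrightarrow> Pp (Suc j) y \<le> Pp j y"
    proof -
      fix y assume "y \<in> S"
      then have "y \<in> Mn" using S by blast
      from step_facts(1)[OF jj this] show "Pp (Suc j) y \<le> Pp j y" by simp
    qed
    have posj: "\<And>y. y \<in> S \<Longrightarrow> Pp j y > 0"
    proof -
      fix y assume y: "y \<in> S"
      show "Pp j y > 0" using mono[OF y] yS[OF y] by linarith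
    qed
    have condS: "\<forall>y\<in>S. Pp j y > 0 \<and> tail (snd y) > j"
    proof
      fix y assume y: "y \<in> S"
      show "Pp j y > 0 \<and> tail (snd y) > j" using posj[OF y] yS[OF y] by simp
    qed
    have IHS: "(\<Sum>x\<in>foldl gf S (St j). p x) \<ge> (\<Sum>y\<in>S. Pp j y) + (\<Sum>k\<in>{1..j}. hv k)"
      by (rule IH[OF fin S fS condS])
    show "(\<Sum>x\<in>foldl gf S (St (Suc j)). p x) \<ge> (\<Sum>y\<in>S. Pp (Suc j) y) + (\<Sum>k\<in>{1..Suc j}. hv k)"
    proof (cases "\<exists>xs. pushP (Suc j) xs")
      case False
      then have np: "nopush (Suc j)" using step_cases jj by blast
      then have eqS: "St (Suc j) = St j" and eqP: "\<forall>y\<in>Mn. Pp (Suc j) y = Pp j y"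
        unfolding nopush_def by auto
      have hv0: "hv (Suc j) = 0" using False unfolding hv_def by simp
      have "(\<Sum>y\<in>S. Pp (Suc j) y) = (\<Sum>y\<in>S. Pp j y)" 
        by (rule sum.cong) (use eqP S in blast)+
      then show ?thesis using IHS eqS sumS hv0 by simp
    next
      case True
      define xs where "xs = (SOME xs. pushP (Suc j) xs)"
      have P: "pushP (Suc j) xs" unfolding xs_def using True by (rule someI_ex)
      have hv: "hv (Suc j) = Pp j xs" unfolding hv_def xs_def using True by simp
      have xsp: "xs \<in> Mn" "tail (snd xs) = Suc j" "Pp j xs > 0" "St (Suc j) = xs # St j"
        using P unfolding pushP_def by auto
      have nin: "xs \<notin> S" using yS xsp(2) by fastforce
      have fold: "foldl gf S (St (Suc j)) = foldl gf (gf S xs) (St j)" using xsp(4) by simp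
      have sm: "(\<Sum>y\<in>S. Pp (Suc j) y) \<le> (\<Sum>y\<in>S. Pp j y)" using mono by (rule sum_mono)
      show ?thesis
      proof (cases "feas (insert xs S)")
        case True
        have c2: "\<forall>y\<in>insert xs S. Pp j y > 0 \<and> tail (snd y) > j" using condS xsp by simp
        have f2: "finite (insert xs S)" using fin by simp
        have S2: "insert xs S \<subseteq> Mn" using S xsp(1) by simp
        have I2: "(\<Sum>x\<in>foldl gf (insert xs S) (St j). p x) \<ge> (\<Sum>y\<in>insert xs S. Pp j y) + (\<Sum>k\<in>{1..j}. hv k)"
          by (rule IH[OF f2 S2 True c2])
        have e2: "(\<Sum>y\<in>insert xs S. Pp j y) = Pp j xs + (\<Sum>y\<in>S. Pp j y)" using fin nin by simp
        have "foldl gf S (St (Suc j)) = foldl gf (insert xs S) (St j)" using fold True by simp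
        then show ?thesis using I2 e2 sm hv sumS by simp
      next
        case False
        have "(\<Sum>y\<in>S. Pp (Suc j - 1) y - Pp (Suc j) y) \<ge> Pp (Suc j - 1) xs"
          by (rule dec_lower[OF P S fS False nin]) (use posj in simp)
        then have d: "(\<Sum>y\<in>S. Pp j y) - (\<Sum>y\<in>S. Pp (Suc j) y) \<ge> Pp j xs"
          by (simp add: sum_subtractf)
        have "foldl gf S (St (Suc j)) = foldl gf S (St j)" using fold False by simp
        then show ?thesis using IHS d hv sumS by simp
      qed
    qed
  qed
qed

lemma telescope: "((f::nat\<Rightarrow>real) 0) - f n = (\<Sum>k\<in>{1..n}. f (k-1) - f k)"
  by (induction n) auto

lemma narrow_bound:
  assumes F: "F \<subseteq> Mn" and fF: "feas F"
  shows "(\<Sum>x\<in>F. p x) \<le> (1 + real T + real \<Delta> + 2 * real J) * (\<Sum>k\<in>{1..N}. hv k)"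
proof -
  have FM: "F \<subseteq> M" using F Mn_sub by auto
  have p0: "\<forall>x\<in>Mn. Pp 0 x = p x" using run unfolding algIIa_run_def by auto
  have "(\<Sum>x\<in>F. p x) = (\<Sum>x\<in>F. Pp 0 x)" using p0 F by (intro sum.cong) auto
  also have "\<dots> \<le> (\<Sum>x\<in>F. Pp 0 x - Pp N x)"
  proof (rule sum_mono)
    fix x assume x: "x \<in> F"
    have "tail (snd x) \<le> N" using tail_props(3)[of x] x FM by blast
    then have "Pp N x \<le> 0" using final_nonpos[of x N] x F by blast
    then show "Pp 0 x \<le> Pp 0 x - Pp N x" by simp
  qed
  also have "\<dots> = (\<Sum>x\<in>F. \<Sum>k\<in>{1..N}. Pp (k-1) x - Pp k x)"
    by (intro sum.cong refl) (rule telescope)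
  also have "\<dots> = (\<Sum>k\<in>{1..N}. \<Sum>x\<in>F. Pp (k-1) x - Pp k x)" by (rule sum.swap)
  also have "\<dots> \<le> (\<Sum>k\<in>{1..N}. (1 + real T + real \<Delta> + 2 * real J) * hv k)"
    by (rule sum_mono) (rule dec_upper[OF _ F fF])
  also have "\<dots> = (1 + real T + real \<Delta> + 2 * real J) * (\<Sum>k\<in>{1..N}. hv k)"
    by (simp add: sum_distrib_left)
  finally show ?thesis .
qed

end
theorem corollary1:
  fixes K L N T J \<Delta> :: nat
    and g :: "nat \<Rightarrow> nat"
    and p :: "pair \<Rightarrow> real"
    and \<beta> :: "nat \<Rightarrow> pair \<Rightarrow> real"
    and I :: "'q set"
    and \<alpha> :: "'q \<Rightarrow> pair \<Rightarrow> nat"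
    and Pp :: "nat \<Rightarrow> pair \<Rightarrow> real"
    and St :: "nat \<Rightarrow> pair list"
  assumes part: "\<forall>k\<in>{1..K}. g k \<in> {1..L}"
    and groups_nonempty: "\<forall>s\<in>{1..L}. groupset K g s \<noteq> {}"
    and finI: "finite I"
    and p_nonneg: "\<forall>x\<in>pairs K g L T N. p x \<ge> 0"
    and beta_range: "\<forall>x\<in>pairs K g L T N. \<forall>q\<in>{1..J}. 0 \<le> \<beta> q x \<and> \<beta> q x \<le> 1"
    and alpha_bin: "\<forall>x\<in>pairs K g L T N. \<forall>q\<in>I. \<alpha> q x \<in> {0, 1}"
    and alpha_sum: "\<forall>x\<in>pairs K g L T N. (\<Sum>q\<in>I. \<alpha> q x) \<le> \<Delta>"
    and run: "algIIa_run (narrow J \<beta> (pairs K g L T N)) p (conflicts K g L I \<alpha>)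
                (maxbeta J \<beta>) N Pp St"
  defines "Mwide \<equiv> pairs K g L T N - narrow J \<beta> (pairs K g L T N)"
    and "Wopt \<equiv> opt_value (pairs K g L T N) (feasible K g L N J \<beta> I \<alpha>) p"
    and "W \<equiv> max (\<Sum>x\<in>greedy_pop (feasible K g L N J \<beta> I \<alpha>) (St N). p x)
                 (opt_value (pairs K g L T N - narrow J \<beta> (pairs K g L T N))
                            (feasible K g L N J \<beta> I \<alpha>) p)"
  shows "(Mwide = {} \<longrightarrow> W \<ge> Wopt / (1 + real T + real \<Delta> + 2 * real J)) \<and>
         (Mwide \<noteq> {} \<longrightarrow> W \<ge> Wopt / (2 + real T + real \<Delta> + 2 * real J))"
proof -
  interpret cs K L N T J \<Delta> g p \<beta> I \<alpha> Pp St
    using part finI p_nonneg beta_range alpha_bin alpha_sum run by unfold_locales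
  let ?c = "1 + real T + real \<Delta> + 2 * real J"
  let ?H = "\<Sum>k\<in>{1..N}. hv k"
  let ?Wn = "\<Sum>x\<in>greedy_pop feas (St N). p x"
  let ?Ww = "opt_value (M - Mn) feas p"
  have feas0: "feas {}" unfolding feasible_def by simp
  have famfin: "\<And>A. finite A \<Longrightarrow> finite {F. F \<subseteq> A \<and> feas F}"
    by (rule finite_subset[of _ "Pow _"]) auto
  have fam0: "\<And>A. {} \<in> {F. F \<subseteq> A \<and> feas F}" using feas0 by simp
  have "Wopt \<in> (\<lambda>F. \<Sum>x\<in>F. p x) ` {F. F \<subseteq> M \<and> feas F}"
    unfolding Wopt_def opt_value_def
    by (rule Max_in) (use famfin[OF M_fin] fam0 in auto)
  then obtain Fs where Fs: "Fs \<subseteq> M" "feas Fs" and Wo: "Wopt = (\<Sum>x\<in>Fs. p x)" by auto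
  have finFs: "finite Fs" using Fs M_fin finite_subset by blast
  define F1 where "F1 = Fs \<inter> Mn"
  define F2 where "F2 = Fs - Mn"
  have split: "Wopt = (\<Sum>x\<in>F1. p x) + (\<Sum>x\<in>F2. p x)"
    unfolding Wo F1_def F2_def using sum.Int_Diff[OF finFs] by blast
  have fF1: "feas F1" using feas_subset[OF Fs(2) _ Fs(1)] unfolding F1_def by blast
  have fF2: "feas F2" using feas_subset[OF Fs(2) _ Fs(1)] unfolding F2_def by blast
  have b1: "(\<Sum>x\<in>F1. p x) \<le> ?c * ?H"
    by (rule narrow_bound) (use fF1 F1_def in auto)
  have "(\<Sum>x\<in>foldl gf {} (St N). p x) \<ge> (\<Sum>y\<in>{}. Pp N y) + ?H"
    using greedy_ind[of N] feas0 by (metis (no_types, lifting) empty_iff empty_subsetI finite.emptyI order_refl)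
  then have Hle: "?H \<le> ?Wn" unfolding greedy_pop_def by simp
  have b2: "(\<Sum>x\<in>F2. p x) \<le> ?Ww"
    unfolding opt_value_def
    by (rule Max_ge) (use famfin[of "M - Mn"] M_fin fF2 Fs(1) F2_def in auto)
  have WnW: "?Wn \<le> W" and WwW: "?Ww \<le> W" unfolding W_def by auto
  have cpos: "?c > 0" by simp
  have cH: "?c * ?H \<le> ?c * W" using Hle WnW cpos by (intro mult_left_mono) auto
  show ?thesis
  proof (intro conjI impI)
    assume "Mwide = {}"
    then have "F2 = {}" unfolding Mwide_def F2_def using Fs(1) by blast
    then have "(\<Sum>x\<in>F2. p x) = 0" by simp
    then have "Wopt \<le> ?c * W" using split b1 cH by linarith
    then show "W \<ge> Wopt / (1 + real T + real \<Delta> + 2 * real J)"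
      using cpos by (simp add: pos_divide_le_eq mult.commute)
  next
    assume "Mwide \<noteq> {}"
    have "Wopt \<le> ?c * W + W" using split b1 cH b2 WwW by linarith
    then have "Wopt \<le> W * (2 + real T + real \<Delta> + 2 * real J)" by (simp add: algebra_simps)
    then show "W \<ge> Wopt / (2 + real T + real \<Delta> + 2 * real J)"
      by (simp add: pos_divide_le_eq)
  qed
qed

end
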